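(* Let $G$ be a finitely generated group and let $A$ be a finite symmetric generating set of $G$. Equip $G$ with the word metric $\delta_A$. Then for every real $r\geqslant 0$ there exists a minimal $r$-net in the metric space $(G,\delta_A)$.
   Context: A set $A\subseteq G$ is symmetric if $A=A^{-1}$. The word metric is $\delta_A(x,y)=$ the least $n\geqslant 0$ such that $x^{-1}y$ is a product of $n$ elements of $A\cup\{1\}$. In a metric space $(X,\delta)$, an $r$-net is a subset $N\subseteq X$ such that for every $x\in X$ there is $z\in N$ with $\delta(x,z)\leqslant r$; a minimal $r$-net is an $r$-net no proper subset of which is an $r$-net. *)

theory Defs
  imports "HOL-Algebra.Algebra"
begin

definition word_prod :: "('a, 'b) monoid_scheme \<Rightarrow> 'a list \<Rightarrow> 'a" where
  "word_prod G xs = foldr (\<lambda>a b. a \<otimes>\<^bsub>G\<^esub> b) xs \<one>\<^bsub>G\<^esub>"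

definition word_dist :: "('a, 'b) monoid_scheme \<Rightarrow> 'a set \<Rightarrow> 'a \<Rightarrow> 'a \<Rightarrow> nat" where
  "word_dist G A x y = (LEAST n. \<exists>xs. set xs \<subseteq> A \<union> {\<one>\<^bsub>G\<^esub>} \<and> length xs = n \<and>
       word_prod G xs = inv\<^bsub>G\<^esub> x \<otimes>\<^bsub>G\<^esub> y)"

definition symmetric_set :: "('a, 'b) monoid_scheme \<Rightarrow> 'a set \<Rightarrow> bool" where
  "symmetric_set G A \<longleftrightarrow> A \<subseteq> carrier G \<and> {m_inv G a | a. a \<in> A} = A"

definition is_net :: "'a set \<Rightarrow> ('a \<Rightarrow> 'a \<Rightarrow> real) \<Rightarrow> real \<Rightarrow> 'a set \<Rightarrow> bool" where
  "is_net S \<delta> \<rho> M \<longleftrightarrow> M \<subseteq> S \<and> (\<forall>x\<in>S. \<exists>z\<in>M. \<delta> x z \<le> \<rho>)"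

definition minimal_net :: "'a set \<Rightarrow> ('a \<Rightarrow> 'a \<Rightarrow> real) \<Rightarrow> real \<Rightarrow> 'a set \<Rightarrow> bool" where
  "minimal_net S \<delta> \<rho> M \<longleftrightarrow> is_net S \<delta> \<rho> M \<and> (\<forall>M'. M' \<subset> M \<longrightarrow> \<not> is_net S \<delta> \<rho> M')"

end

theory Submission
  imports Defs
begin

lemma wp_carrier: "group G \<Longrightarrow> set xs \<subseteq> carrier G \<Longrightarrow> word_prod G xs \<in> carrier G"
  by (induction xs) (auto simp: word_prod_def group.is_monoid monoid.m_closed)

lemma wp_append: "group G \<Longrightarrow> set xs \<subseteq> carrier G \<Longrightarrow> set ys \<subseteq> carrier G \<Longrightarrow>
   word_prod G (xs @ ys) = word_prod G xs \<otimes>\<^bsub>G\<^esub> word_prod G ys"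
proof (induction xs)
  case Nil
  then show ?case using wp_carrier[of G ys] by (simp add: word_prod_def group.is_monoid monoid.l_one)
next
  case (Cons a xs)
  then show ?case using wp_carrier[of G ys] wp_carrier[of G xs]
    by (simp add: word_prod_def group.is_monoid monoid.m_assoc)
qed

lemma wp_inv: "group G \<Longrightarrow> set xs \<subseteq> carrier G \<Longrightarrow>
   word_prod G (rev (map (m_inv G) xs)) = inv\<^bsub>G\<^esub> (word_prod G xs)"
proof (induction xs)
  case Nil
  then show ?case by (simp add: word_prod_def group.is_monoid monoid.inv_one)
next
  case (Cons a xs)
  have "word_prod G (rev (map (m_inv G) (a#xs))) = word_prod G (rev (map (m_inv G) xs)) \<otimes>\<^bsub>G\<^esub> word_prod G [inv\<^bsub>G\<^esub> a]"
  proof -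
    have c1: "set (rev (map (m_inv G) xs)) \<subseteq> carrier G" using Cons by (auto simp: group.inv_closed)
    have c2: "set [inv\<^bsub>G\<^esub> a] \<subseteq> carrier G" using Cons by (auto simp: group.inv_closed)
    show ?thesis using wp_append[OF Cons(2) c1 c2] by simp
  qed
  also have "\<dots> = inv\<^bsub>G\<^esub> (word_prod G xs) \<otimes>\<^bsub>G\<^esub> inv\<^bsub>G\<^esub> a"
    using Cons by (simp add: word_prod_def group.inv_closed group.is_monoid monoid.r_one)
  also have "\<dots> = inv\<^bsub>G\<^esub> (a \<otimes>\<^bsub>G\<^esub> word_prod G xs)"
    using Cons wp_carrier[of G xs] by (simp add: group.inv_mult_group)
  finally show ?case by (simp add: word_prod_def)
qed

lemma dist_sym:
  assumes G: "group G" and S: "symmetric_set G A" and x: "x \<in> carrier G" and y: "y \<in> carrier G"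
  shows "word_dist G A x y = word_dist G A y x"
proof -
  have AC: "A \<subseteq> carrier G" and invA: "\<And>a. a \<in> A \<Longrightarrow> inv\<^bsub>G\<^esub> a \<in> A"
    using S unfolding symmetric_set_def by blast+
  have one: "\<one>\<^bsub>G\<^esub> \<in> carrier G" using G by (simp add: group.is_monoid monoid.one_closed)
  have key: "\<exists>ys. set ys \<subseteq> A \<union> {\<one>\<^bsub>G\<^esub>} \<and> length ys = n \<and> word_prod G ys = inv\<^bsub>G\<^esub> v \<otimes>\<^bsub>G\<^esub> u"
    if "set xs \<subseteq> A \<union> {\<one>\<^bsub>G\<^esub>}" "length xs = n" "word_prod G xs = inv\<^bsub>G\<^esub> u \<otimes>\<^bsub>G\<^esub> v"
       "u \<in> carrier G" "v \<in> carrier G" for xs n u v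
  proof (intro exI conjI)
    have sc: "set xs \<subseteq> carrier G" using that(1) AC one by blast
    show "set (rev (map (m_inv G) xs)) \<subseteq> A \<union> {\<one>\<^bsub>G\<^esub>}"
      using that(1) invA G by (auto simp: group.is_monoid monoid.inv_one)
    show "length (rev (map (m_inv G) xs)) = n" using that by simp
    show "word_prod G (rev (map (m_inv G) xs)) = inv\<^bsub>G\<^esub> v \<otimes>\<^bsub>G\<^esub> u"
      using wp_inv[OF G sc] that G
      by (simp add: group.inv_mult_group group.inv_closed group.inv_inv)
  qed
  have "(\<lambda>n. \<exists>xs. set xs \<subseteq> A \<union> {\<one>\<^bsub>G\<^esub>} \<and> length xs = n \<and> word_prod G xs = inv\<^bsub>G\<^esub> x \<otimes>\<^bsub>G\<^esub> y)
      = (\<lambda>n. \<exists>xs. set xs \<subseteq> A \<union> {\<one>\<^bsub>G\<^esub>} \<and> length xs = n \<and> word_prod G xs = inv\<^bsub>G\<^esub> y \<otimes>\<^bsub>G\<^esub> x)"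
    using key x y by (intro ext iffI) (elim exE conjE; blast)+
  then show ?thesis unfolding word_dist_def by simp
qed

lemma dist_self:
  assumes G: "group G" and x: "x \<in> carrier G"
  shows "word_dist G A x x = 0"
proof -
  have "word_prod G [] = inv\<^bsub>G\<^esub> x \<otimes>\<^bsub>G\<^esub> x" using G x by (simp add: word_prod_def group.l_inv)
  then show ?thesis unfolding word_dist_def
    by (intro Least_eq_0) (rule exI[of _ "[]"], simp)
qed

theorem corollary2p7:
  fixes G :: "('a, 'b) monoid_scheme" and A :: "'a set" and r :: real
  assumes "group G"
    and "finite A"
    and "symmetric_set G A"
    and "generate G A = carrier G"
    and "r \<ge> 0"
  shows "\<exists>N. minimal_net (carrier G) (\<lambda>x y. real (word_dist G A x y)) r N"
proof -
  define d where "d = (\<lambda>x y. real (word_dist G A x y))"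
  define Fam where "Fam = {N. N \<subseteq> carrier G \<and> (\<forall>x\<in>N. \<forall>y\<in>N. x \<noteq> y \<longrightarrow> d x y > r)}"
  have "\<exists>Mx\<in>Fam. \<forall>Y\<in>Fam. Mx \<subseteq> Y \<longrightarrow> Y = Mx"
  proof (rule Zorn_Lemma2, intro ballI)
    fix C assume C: "C \<in> chains Fam"
    show "\<exists>U\<in>Fam . \<forall>XX\<in>C. XX \<subseteq> U"
    proof (intro bexI[of _ "\<Union>C"])
      show "\<forall>XX\<in>C. XX \<subseteq> \<Union> C" by blast
      show "\<Union>C \<in> Fam" unfolding Fam_def
      proof (safe)
        fix x XX assume "x \<in> XX" "XX \<in> C" then show "x \<in> carrier G"
          using C unfolding chains_def Fam_def by blast
      next
        fix x y XX Y assume a: "x \<in> XX" "XX \<in> C" "y \<in> Y" "Y \<in> C" "x \<noteq> y"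
        have "XX \<subseteq> Y \<or> Y \<subseteq> XX" using C a unfolding chains_def chain_subset_def by blast
        then show "r < d x y" using a C unfolding chains_def Fam_def by blast
      qed
    qed
  qed
  then obtain M where MF: "M \<in> Fam" and Mmax: "\<And>XX. XX \<in> Fam \<Longrightarrow> M \<subseteq> XX \<Longrightarrow> XX = M" by blast
  have MC: "M \<subseteq> carrier G" and Msep: "\<And>x y. x \<in> M \<Longrightarrow> y \<in> M \<Longrightarrow> x \<noteq> y \<Longrightarrow> d x y > r"
    using MF unfolding Fam_def by blast+
  have net: "is_net (carrier G) d r M"
    unfolding is_net_def
  proof (intro conjI ballI MC)
    fix x assume x: "x \<in> carrier G"
    show "\<exists>z\<in>M. d x z \<le> r"
    proof (rule ccontr)
      assume nz: "\<not> (\<exists>z\<in>M. d x z \<le> r)"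
      then have xM: "x \<notin> M" using dist_self[OF assms(1) x, of A] assms(5) unfolding d_def by auto
      have sep: "r < d u v" if "u \<in> insert x M" "v \<in> insert x M" "u \<noteq> v" for u v
      proof (cases "u = x")
        case True
        then have "v \<in> M" using that by auto
        then show ?thesis using nz True by (auto simp: not_le)
      next
        case False
        then have u: "u \<in> M" using that by auto
        show ?thesis
        proof (cases "v = x")
          case True
          have "d u x = d x u" unfolding d_def using dist_sym[OF assms(1) assms(3)] u MC x by auto
          then show ?thesis using nz True u by (auto simp: not_le)
        next
          case False
          then show ?thesis using u that Msep by auto
        qed
      qed
      have "insert x M \<in> Fam" unfolding Fam_def using sep x MC by blast
      then have "insert x M = M" using Mmax by blast
      then show False using xM by blast
    qed
  qed
  have "minimal_net (carrier G) d r M"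
    unfolding minimal_net_def
  proof (intro conjI allI impI net)
    fix M' assume sub: "M' \<subset> M"
    then obtain z where z: "z \<in> M" "z \<notin> M'" by blast
    show "\<not> is_net (carrier G) d r M'"
    proof
      assume "is_net (carrier G) d r M'"
      then obtain w where "w \<in> M'" "d z w \<le> r" using z MC unfolding is_net_def by blast
      then show False using Msep[of z w] z sub by auto
    qed
  qed
  then show ?thesis unfolding d_def by blast
qed

end
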